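(* Let $X$ be a random variable with distribution $P$ on $\mathbb{Z}_+$ and mean $\lambda>0$, and let $\mathrm{Po}_\lambda(x)=e^{-\lambda}\lambda^x/x!$. Let $\mu=\sum_{x\ge0}\sqrt{P(x)\mathrm{Po}_\lambda(x)}$. Then $1-\mu^2\le K(X)$, and consequently $$\sum_{x\ge0}\Big(\sqrt{P(x)}-\sqrt{\mathrm{Po}_\lambda(x)}\Big)^2=2-2\mu\le 2K(X).$$
   Context: For $X$ with distribution $P$ on $\mathbb{Z}_+$ and mean $\lambda>0$, the scaled Fisher information is $K(X)=\lambda\sum_{x\ge0}\frac{\big(\frac{(x+1)P(x+1)}{\lambda}-P(x)\big)^2}{P(x)}$ (equivalently $\lambda E[\rho_X(X)^2]$ with $\rho_X(x)=\frac{(x+1)P(x+1)}{\lambda P(x)}-1$), with conventions $0/0=0$, $c/0=\infty$ for $c>0$. *)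

theory Defs
  imports "HOL-Analysis.Analysis"
begin

definition Po :: "real \<Rightarrow> nat \<Rightarrow> real" where
  "Po l x = exp (- l) * l ^ x / fact x"

text \<open>Summand of the scaled Fisher information, with conventions 0/0 = 0 and c/0 = infinity for c > 0.\<close>
definition fisher_term :: "(nat \<Rightarrow> real) \<Rightarrow> real \<Rightarrow> nat \<Rightarrow> ennreal" where
  "fisher_term P l x =
     (let d = (real (x + 1) * P (x + 1) / l - P x)\<^sup>2 in
      if P x = 0 then (if d = 0 then 0 else \<infinity>) else ennreal (d / P x))"

definition scaled_fisher :: "(nat \<Rightarrow> real) \<Rightarrow> real \<Rightarrow> ereal" where
  "scaled_fisher P l = ereal l * enn2ereal (\<Sum>x. fisher_term P l x)"

end

theory Submission
  imports Defs
begin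


lemma V_eq:
  fixes q h :: "nat \<Rightarrow> real"
  shows "(\<Sum>x<N. q x) * (\<Sum>x<N. q x * (h x)\<^sup>2) - (\<Sum>x<N. q x * h x)\<^sup>2
       = (\<Sum>y<N. \<Sum>x<y. q x * q y * (h y - h x)\<^sup>2)"
proof (induction N)
  case 0 then show ?case by simp
next
  case (Suc N)
  have e: "(\<Sum>x<N. q x * q N * (h N - h x)\<^sup>2) = q N * ((\<Sum>x<N. q x * (h x)\<^sup>2)
     - 2 * h N * (\<Sum>x<N. q x * h x) + (h N)\<^sup>2 * (\<Sum>x<N. q x))"
    by (simp add: sum_distrib_left sum_subtractf sum.distrib power2_eq_square algebra_simps)
  show ?case using Suc e by (simp add: power2_eq_square algebra_simps)
qed

lemma path_ineq:
  fixes h :: "nat \<Rightarrow> real"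
  assumes "x \<le> y"
  shows "(h y - h x)\<^sup>2 \<le> real (y - x) * (\<Sum>k\<in>{x..<y}. (h (Suc k) - h k)\<^sup>2)"
proof -
  have "(h y - h x) = (\<Sum>k\<in>{x..<y}. h (Suc k) - h k)" using sum_Suc_diff'[OF assms, of h] by simp
  then show ?thesis using sum_squared_le_sum_of_squares[of "\<lambda>k. h (Suc k) - h k" "{x..<y}"]
    by (simp add: mult.commute)
qed

lemma swap3:
  fixes f :: "nat \<Rightarrow> nat \<Rightarrow> nat \<Rightarrow> real"
  shows "(\<Sum>y<N. \<Sum>x<y. \<Sum>k\<in>{x..<y}. f x y k)
     = (\<Sum>k<N. \<Sum>y<N. \<Sum>x<y. if x \<le> k \<and> k < y then f x y k else 0)"
proof -
  have "(\<Sum>y<N. \<Sum>x<y. \<Sum>k\<in>{x..<y}. f x y k)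
      = (\<Sum>y<N. \<Sum>x<y. \<Sum>k<N. if x \<le> k \<and> k < y then f x y k else 0)"
  proof (rule sum.cong[OF refl], rule sum.cong[OF refl])
    fix y x assume "y \<in> {..<N}" "x \<in> {..<y}"
    then have eq: "{x..<y} = {k\<in>{..<N}. x \<le> k \<and> k < y}" by auto
    show "(\<Sum>k\<in>{x..<y}. f x y k) = (\<Sum>k<N. if x \<le> k \<and> k < y then f x y k else 0)"
      by (simp only: eq sum.inter_filter[OF finite_lessThan])
  qed
  also have "\<dots> = (\<Sum>y<N. \<Sum>k<N. \<Sum>x<y. if x \<le> k \<and> k < y then f x y k else 0)"
    by (intro sum.cong refl sum.swap)
  also have "\<dots> = (\<Sum>k<N. \<Sum>y<N. \<Sum>x<y. if x \<le> k \<and> k < y then f x y k else 0)"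
    by (rule sum.swap)
  finally show ?thesis .
qed

lemma mean_partial:
  fixes q :: "nat \<Rightarrow> real"
  assumes stein: "\<And>x. real (Suc x) * q (Suc x) = l * q x"
  shows "(\<Sum>x<Suc k. real x * q x) = l * (\<Sum>x<k. q x)"
  by (induction k) (simp_all add: stein[simplified] distrib_left)

lemma D_closed:
  fixes q :: "nat \<Rightarrow> real"
  assumes stein: "\<And>x. real (Suc x) * q (Suc x) = l * q x"
  shows "(\<Sum>y<Suc k + m. \<Sum>x<y. if x \<le> k \<and> k < y then q x * q y * (real y - real x) else 0)
    = l * (q k * (\<Sum>x<k+m. q x) - (\<Sum>x<k. q x) * q (k+m))"
proof (induction m)
  case 0
  have "(\<Sum>y<Suc k. \<Sum>x<y. if x \<le> k \<and> k < y then q x * q y * (real y - real x) else (0::real)) = 0"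
    by (intro sum.neutral ballI) auto
  then show ?case by simp
next
  case (Suc m)
  define N where "N = Suc k + m"
  have filt: "(\<Sum>x<N. if x \<le> k \<and> k < N then q x * q N * (real N - real x) else 0)
      = (\<Sum>x<Suc k. q x * q N * (real N - real x))"
  proof -
    have eq: "{..<Suc k} = {x\<in>{..<N}. x \<le> k \<and> k < N}" unfolding N_def by auto
    show ?thesis by (simp only: eq sum.inter_filter[OF finite_lessThan])
  qed
  have inner: "(\<Sum>x<Suc k. q x * q N * (real N - real x))
      = (real N * q N) * (\<Sum>x<Suc k. q x) - q N * (\<Sum>x<Suc k. real x * q x)"
    by (simp add: sum_distrib_left sum_subtractf algebra_simps)
  have sN: "real N * q N = l * q (k + m)" unfolding N_def using stein[of "k+m"] by simp
  have "(\<Sum>y<Suc N. \<Sum>x<y. if x \<le> k \<and> k < y then q x * q y * (real y - real x) else 0)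
     = (\<Sum>y<N. \<Sum>x<y. if x \<le> k \<and> k < y then q x * q y * (real y - real x) else 0)
       + (\<Sum>x<Suc k. q x * q N * (real N - real x))"
    using filt by simp
  also have "\<dots> = l * (q k * (\<Sum>x<k+m. q x) - (\<Sum>x<k. q x) * q (k+m))
       + (l * q (k + m)) * (\<Sum>x<Suc k. q x) - q N * (l * (\<Sum>x<k. q x))"
    using Suc.IH inner sN mean_partial[of q l k, OF stein] unfolding N_def by simp
  also have "\<dots> = l * (q k * (\<Sum>x<k + Suc m. q x) - (\<Sum>x<k. q x) * q (k + Suc m))"
    unfolding N_def by (simp add: algebra_simps)
  finally show ?case unfolding N_def by simp
qed

lemma D_bound:
  fixes q :: "nat \<Rightarrow> real"
  assumes stein: "\<And>x. real (Suc x) * q (Suc x) = l * q x"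
    and qnn: "\<And>x. q x \<ge> 0" and part: "\<And>n. (\<Sum>x<n. q x) \<le> 1" and lpos: "l > 0"
  shows "(\<Sum>y<N. \<Sum>x<y. if x \<le> k \<and> k < y then q x * q y * (real y - real x) else 0) \<le> l * q k"
proof (cases "N \<le> k")
  case True
  have "(\<Sum>y<N. \<Sum>x<y. if x \<le> k \<and> k < y then q x * q y * (real y - real x) else (0::real)) = 0"
    using True by (intro sum.neutral ballI) auto
  then show ?thesis using lpos qnn[of k] by simp
next
  case False
  then obtain m where m: "N = Suc k + m" by (metis add_Suc less_imp_Suc_add not_le)
  have "l * (q k * (\<Sum>x<k+m. q x) - (\<Sum>x<k. q x) * q (k+m)) \<le> l * (q k * 1 - 0)"
    using lpos qnn part[of "k+m"] sum_nonneg[of "{..<k}" q] qnn[of "k+m"] qnn[of k]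
    by (intro mult_left_mono diff_mono mult_left_mono mult_nonneg_nonneg) auto
  then show ?thesis using D_closed[of q l k m, OF stein] m by simp
qed

lemma fin_poincare:
  fixes q h :: "nat \<Rightarrow> real"
  assumes stein: "\<And>x. real (Suc x) * q (Suc x) = l * q x"
    and qnn: "\<And>x. q x \<ge> 0" and part: "\<And>n. (\<Sum>x<n. q x) \<le> 1" and lpos: "l > 0"
  shows "(\<Sum>x<N. q x) * (\<Sum>x<N. q x * (h x)\<^sup>2) - (\<Sum>x<N. q x * h x)\<^sup>2
     \<le> l * (\<Sum>k<N. q k * (h (Suc k) - h k)\<^sup>2)"
proof -
  define a where "a k = (h (Suc k) - h k)\<^sup>2" for k
  define D where "D k = (\<Sum>y<N. \<Sum>x<y. if x \<le> k \<and> k < y then q x * q y * (real y - real x) else 0)" for k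
  have "(\<Sum>x<N. q x) * (\<Sum>x<N. q x * (h x)\<^sup>2) - (\<Sum>x<N. q x * h x)\<^sup>2
       = (\<Sum>y<N. \<Sum>x<y. q x * q y * (h y - h x)\<^sup>2)" by (rule V_eq)
  also have "\<dots> \<le> (\<Sum>y<N. \<Sum>x<y. q x * q y * ((real y - real x) * (\<Sum>k\<in>{x..<y}. a k)))"
  proof (rule sum_mono, rule sum_mono)
    fix y x assume "y \<in> {..<N}" "x \<in> {..<y}"
    then have xy: "x \<le> y" by auto
    have "(h y - h x)\<^sup>2 \<le> (real y - real x) * (\<Sum>k\<in>{x..<y}. a k)"
      using path_ineq[OF xy, of h] xy unfolding a_def by (simp add: of_nat_diff)
    then show "q x * q y * (h y - h x)\<^sup>2 \<le> q x * q y * ((real y - real x) * (\<Sum>k\<in>{x..<y}. a k))"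
      using qnn[of x] qnn[of y] by (intro mult_left_mono) auto
  qed
  also have "\<dots> = (\<Sum>y<N. \<Sum>x<y. \<Sum>k\<in>{x..<y}. q x * q y * (real y - real x) * a k)"
    by (simp add: sum_distrib_left mult.assoc)
  also have "\<dots> = (\<Sum>k<N. \<Sum>y<N. \<Sum>x<y. if x \<le> k \<and> k < y then q x * q y * (real y - real x) * a k else 0)"
    by (rule swap3)
  also have "\<dots> = (\<Sum>k<N. a k * D k)"
    unfolding D_def by (simp add: sum_distrib_left if_distrib mult.commute cong: if_cong)
  also have "\<dots> \<le> (\<Sum>k<N. a k * (l * q k))"
  proof (rule sum_mono)
    fix k assume "k \<in> {..<N}"
    have "D k \<le> l * q k" unfolding D_def by (rule D_bound[OF stein qnn part lpos])
    then show "a k * D k \<le> a k * (l * q k)" by (intro mult_left_mono) (auto simp: a_def)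
  qed
  also have "\<dots> = l * (\<Sum>k<N. q k * (h (Suc k) - h k)\<^sup>2)"
    by (simp add: a_def sum_distrib_left algebra_simps)
  finally show ?thesis .
qed

lemma Po_pos: "l > 0 \<Longrightarrow> Po l x > 0"
  by (simp add: Po_def)

lemma Po_stein: "real (Suc x) * Po l (Suc x) = l * Po l x"
proof -
  define c where "c = real (Suc x)"
  have c: "c > 0" unfolding c_def by simp
  have f: "fact (Suc x) = c * (fact x :: real)" unfolding c_def by simp
  have "c * (exp (- l) * l ^ Suc x / (c * fact x)) = l * (exp (- l) * l ^ x / fact x)"
    using c by (simp add: field_simps)
  then show ?thesis unfolding Po_def f c_def .
qed

lemma Po_sums: "Po l sums 1"
proof -
  have "(\<lambda>n. exp (- l) * (l ^ n /\<^sub>R fact n)) sums (exp (- l) * exp l)"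
    by (rule sums_mult[OF exp_converges])
  moreover have "(\<lambda>n. exp (- l) * (l ^ n /\<^sub>R fact n)) = Po l"
    by (auto simp: fun_eq_iff Po_def scaleR_conv_of_real divide_inverse)
  moreover have "exp (- l) * exp l = 1" by (simp add: exp_minus_inverse mult.commute)
  ultimately show ?thesis by simp
qed

lemma fisher_lower:
  fixes P :: "nat \<Rightarrow> real"
  assumes nonneg: "\<And>x. P x \<ge> 0" and pos: "l > 0"
  defines "h \<equiv> \<lambda>x. sqrt (P x / Po l x)"
  shows "ennreal (Po l x * (h (Suc x) - h x)\<^sup>2) \<le> fisher_term P l x"
proof -
  define q where "q = Po l"
  have qpos: "\<And>x. q x > 0" unfolding q_def using Po_pos[OF pos] by simp
  have hq: "P x = q x * (h x)\<^sup>2" for x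
  proof -
    have "P x / q x \<ge> 0" using qpos[of x] nonneg[of x] by simp
    then show ?thesis unfolding h_def q_def using qpos[of x] unfolding q_def by simp
  qed
  have hnn: "h x \<ge> 0" for x unfolding h_def using nonneg[of x] Po_pos[OF pos, of x] by simp
  have st: "real (x + 1) * P (x + 1) / l = q x * (h (Suc x))\<^sup>2"
  proof -
    have "real (x + 1) * P (x + 1) = (real (Suc x) * q (Suc x)) * (h (Suc x))\<^sup>2"
      using hq[of "Suc x"] by simp
    also have "\<dots> = l * (q x * (h (Suc x))\<^sup>2)" unfolding q_def Po_stein by simp
    finally show ?thesis using pos by simp
  qed
  show ?thesis
  proof (cases "P x = 0")
    case True
    then have h0: "h x = 0" unfolding h_def by simp
    show ?thesis
    proof (cases "(real (x + 1) * P (x + 1) / l - P x)\<^sup>2 = 0")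
      case True
      then have "P (Suc x) = 0" using pos \<open>P x = 0\<close> by simp
      then have "q x * (h (Suc x))\<^sup>2 = 0" using st by simp
      then have "h (Suc x) = 0" using qpos[of x] by simp
      then show ?thesis using h0 by simp
    next
      case False
      then show ?thesis using True unfolding fisher_term_def by (simp add: Let_def)
    qed
  next
    case False
    then have hx: "h x > 0" using hq[of x] hnn[of x] by (metis mult_zero_right order_less_le power_zero_numeral)
    define a where "a = h x"
    define b where "b = h (Suc x)"
    have a: "a > 0" and b: "b \<ge> 0" using hx hnn unfolding a_def b_def by auto
    have key: "q x * (b - a)\<^sup>2 \<le> (q x * b\<^sup>2 - q x * a\<^sup>2)\<^sup>2 / (q x * a\<^sup>2)"
    proof -
      have "(b - a)\<^sup>2 * a\<^sup>2 \<le> (b - a)\<^sup>2 * (b + a)\<^sup>2"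
        using a b by (intro mult_left_mono power_mono) auto
      then have "(q x)\<^sup>2 * ((b - a)\<^sup>2 * a\<^sup>2) \<le> (q x)\<^sup>2 * ((b - a)\<^sup>2 * (b + a)\<^sup>2)"
        by (rule mult_left_mono) auto
      moreover have "q x * (b - a)\<^sup>2 * (q x * a\<^sup>2) = (q x)\<^sup>2 * ((b - a)\<^sup>2 * a\<^sup>2)"
        by (simp add: power2_eq_square algebra_simps)
      moreover have "(q x * b\<^sup>2 - q x * a\<^sup>2)\<^sup>2 = (q x)\<^sup>2 * ((b - a)\<^sup>2 * (b + a)\<^sup>2)"
        by (simp add: power2_eq_square algebra_simps)
      ultimately have "q x * (b - a)\<^sup>2 * (q x * a\<^sup>2) \<le> (q x * b\<^sup>2 - q x * a\<^sup>2)\<^sup>2"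
        by linarith
      then show ?thesis using qpos[of x] a by (simp add: pos_le_divide_eq)
    qed
    have "fisher_term P l x = ennreal ((q x * b\<^sup>2 - q x * a\<^sup>2)\<^sup>2 / (q x * a\<^sup>2))"
      unfolding fisher_term_def using False st hq[of x] unfolding a_def b_def by (simp add: Let_def)
    then show ?thesis using key unfolding a_def b_def q_def by (simp add: ennreal_leI)
  qed
qed

theorem mainTheorem5:
  fixes P :: "nat \<Rightarrow> real" and l :: real
  assumes nonneg: "\<And>x. P x \<ge> 0"
    and prob: "P sums 1"
    and mean: "(\<lambda>x. real x * P x) sums l"
    and pos: "l > 0"
  defines "\<mu> \<equiv> (\<Sum>x. sqrt (P x * Po l x))"
  shows "ereal (1 - \<mu>\<^sup>2) \<le> scaled_fisher P l
    \<and> (\<Sum>x. (sqrt (P x) - sqrt (Po l x))\<^sup>2) = 2 - 2 * \<mu>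
    \<and> ereal (2 - 2 * \<mu>) \<le> 2 * scaled_fisher P l"
proof -
  define q where "q = Po l"
  define h where "h x = sqrt (P x / q x)" for x
  have qpos: "q x > 0" for x unfolding q_def using Po_pos[OF pos] .
  have qnn: "q x \<ge> 0" for x using qpos[of x] by simp
  have stein: "real (Suc x) * q (Suc x) = l * q x" for x unfolding q_def by (rule Po_stein)
  have qsums: "q sums 1" unfolding q_def by (rule Po_sums)
  have part: "(\<Sum>x<n. q x) \<le> 1" for n
    using sum_le_suminf[OF sums_summable[OF qsums], of "{..<n}"] qnn sums_unique[OF qsums] by simp
  have hq: "q x * (h x)\<^sup>2 = P x" for x
  proof -
    have "P x / q x \<ge> 0" using qpos[of x] nonneg[of x] by simp
    then show ?thesis unfolding h_def using qpos[of x] by simp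
  qed
  have hs: "q x * h x = sqrt (P x * q x)" for x
  proof -
    have "sqrt (P x * q x) = sqrt ((P x / q x) * (q x)\<^sup>2)" using qpos[of x] by (simp add: power2_eq_square)
    also have "\<dots> = h x * q x" unfolding h_def real_sqrt_mult real_sqrt_abs using qnn[of x] by simp
    finally show ?thesis by simp
  qed
  have sq: "sqrt (P x * q x) = sqrt (P x) * sqrt (q x)" for x by (simp add: real_sqrt_mult)
  have gm: "sqrt (P x * q x) \<le> (P x + q x) / 2" for x
  proof -
    have "0 \<le> (sqrt (P x) - sqrt (q x))\<^sup>2" by simp
    then show ?thesis using nonneg[of x] qnn[of x] unfolding sq by (simp add: power2_eq_square algebra_simps)
  qed
  have summ_mu: "summable (\<lambda>x. sqrt (P x * q x))"
  proof (rule summable_comparison_test')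
    show "summable (\<lambda>x. (P x + q x) / 2)"
      using sums_summable[OF sums_divide[OF sums_add[OF prob qsums], of 2]] .
    show "norm (sqrt (P x * q x)) \<le> (P x + q x) / 2" for x using gm[of x] nonneg[of x] qnn[of x] by simp
  qed
  have mu_sums: "(\<lambda>x. sqrt (P x * q x)) sums \<mu>" unfolding \<mu>_def q_def
    using summ_mu unfolding q_def by (simp add: summable_sums)
  have mu_nn: "\<mu> \<ge> 0" unfolding \<mu>_def by (rule suminf_nonneg) (use summ_mu q_def nonneg qnn in auto)
  have hell: "(\<lambda>x. (sqrt (P x) - sqrt (q x))\<^sup>2) sums (1 + 1 - 2 * \<mu>)"
  proof -
    have "(\<lambda>x. P x + q x - 2 * sqrt (P x * q x)) sums (1 + 1 - 2 * \<mu>)"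
      by (intro sums_diff sums_add prob qsums sums_mult mu_sums)
    moreover have "(sqrt (P x) - sqrt (q x))\<^sup>2 = P x + q x - 2 * sqrt (P x * q x)" for x
      using nonneg[of x] qnn[of x] unfolding sq by (simp add: power2_eq_square algebra_simps)
    ultimately show ?thesis by simp
  qed
  have part2: "(\<Sum>x. (sqrt (P x) - sqrt (Po l x))\<^sup>2) = 2 - 2 * \<mu>"
    using sums_unique[OF hell] unfolding q_def by simp
  have mu_le1: "\<mu> \<le> 1"
  proof -
    have "0 \<le> (\<Sum>x. (sqrt (P x) - sqrt (q x))\<^sup>2)" by (rule suminf_nonneg) (use hell sums_summable in auto)
    then show ?thesis using sums_unique[OF hell] by simp
  qed
  define g where "g k = q k * (h (Suc k) - h k)\<^sup>2" for k
  have gnn: "g k \<ge> 0" for k unfolding g_def using qnn[of k] by simp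
  have fis: "(\<Sum>k. ennreal (g k)) \<le> (\<Sum>k. fisher_term P l k)"
    by (intro suminf_le summableI) (use fisher_lower[OF nonneg pos] in \<open>auto simp: g_def h_def q_def\<close>)
  have lim: "(\<lambda>N. (\<Sum>x<N. q x) * (\<Sum>x<N. P x) - (\<Sum>x<N. sqrt (P x * q x))\<^sup>2) \<longlonglongrightarrow> 1 * 1 - \<mu>\<^sup>2"
    using qsums prob mu_sums unfolding sums_def by (intro tendsto_intros)
  have part1: "ereal (1 - \<mu>\<^sup>2) \<le> scaled_fisher P l"
  proof (cases "summable g")
    case True
    have "1 - \<mu>\<^sup>2 \<le> l * suminf g"
    proof (rule LIMSEQ_le_const2[OF lim[simplified]], intro exI allI impI)
      fix N :: nat
      have "(\<Sum>x<N. q x) * (\<Sum>x<N. P x) - (\<Sum>x<N. sqrt (P x * q x))\<^sup>2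
          = (\<Sum>x<N. q x) * (\<Sum>x<N. q x * (h x)\<^sup>2) - (\<Sum>x<N. q x * h x)\<^sup>2"
        by (simp add: hq hs)
      also have "\<dots> \<le> l * (\<Sum>k<N. g k)" unfolding g_def by (rule fin_poincare[OF stein qnn part pos])
      also have "\<dots> \<le> l * suminf g"
        using sum_le_suminf[OF True, of "{..<N}"] gnn pos by (intro mult_left_mono) auto
      finally show "(\<Sum>x<N. q x) * (\<Sum>x<N. P x) - (\<Sum>x<N. sqrt (P x * q x))\<^sup>2 \<le> l * suminf g" .
    qed
    moreover have "ereal (l * suminf g) \<le> scaled_fisher P l"
    proof -
      have "ennreal (suminf g) \<le> (\<Sum>k. fisher_term P l k)"
        using fis suminf_ennreal2[OF gnn True] by simp
      then have "enn2ereal (ennreal (suminf g)) \<le> enn2ereal (\<Sum>k. fisher_term P l k)"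
        by (simp add: less_eq_ennreal.rep_eq)
      then have "ereal (suminf g) \<le> enn2ereal (\<Sum>k. fisher_term P l k)"
        using suminf_nonneg[OF True gnn] by simp
      then have "ereal l * ereal (suminf g) \<le> ereal l * enn2ereal (\<Sum>k. fisher_term P l k)"
        using pos by (intro ereal_mult_left_mono) auto
      then show ?thesis unfolding scaled_fisher_def by simp
    qed
    ultimately show ?thesis by (meson ereal_less_eq(3) order_trans)
  next
    case False
    then have "(\<Sum>k. ennreal (g k)) = top" using summable_suminf_not_top[of g] gnn by blast
    then have "(\<Sum>k. fisher_term P l k) = top" using fis by (simp add: top_unique)
    then have "scaled_fisher P l = \<infinity>" unfolding scaled_fisher_def using pos by simp
    then show ?thesis by simp
  qed
  have "ereal (2 - 2 * \<mu>) \<le> ereal (2 * (1 - \<mu>\<^sup>2))"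
    using mu_nn mu_le1 mult_left_mono[OF mu_le1 mu_nn] by (simp add: power2_eq_square)
  also have "\<dots> = 2 * ereal (1 - \<mu>\<^sup>2)" by simp
  also have "\<dots> \<le> 2 * scaled_fisher P l"
    by (rule ereal_mult_left_mono[OF part1]) simp
  finally have part3: "ereal (2 - 2 * \<mu>) \<le> 2 * scaled_fisher P l" by simp
  show ?thesis using part1 part2 part3 by blast
qed

end
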